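(* Let $A\twoheadrightarrow A'$ be a surjection of finite local $k$-algebras whose kernel $J$ satisfies $J^2=0$. Let $I'\subseteq S_{A'}$ and $I\subseteq S_A$ be graded submodules such that (1) $I'_2\subseteq q^\perp\otimes A'$; (2) $(S_A/I)_2$ is a free $A$-module; (3) the image of $I_2$ in $(S_{A'})_2$ is $I'_2$. Then there exists $g\in\mathrm{GL}_n(A)$ with $g\equiv\mathrm{Id}_n \pmod J$ and $(g\circ I)_2\subseteq q^\perp\otimes A$.
   Context: Let $k$ be a field of characteristic zero, $S=k[x_1,\dots,x_n]$, $T=k[y_1,\dots,y_n]$, with $S$ acting on $T$ by differentiation; for $f\in T_d$, $f^\perp=\{g\in S:g\circ f=0\}$. Fix a full rank quadratic form $q\in T_2$. For a $k$-algebra $A$, $S_A=S\otimes_kA=A[x_1,\dots,x_n]$, and $q^\perp\otimes A\subseteq S_A$ denotes the extension of $q^\perp$ (in degree 2, the $A$-submodule of $(S_A)_2$ annihilating $q$). $\mathrm{GL}_n(A)$ acts on $S_A$ by $A$-linear substitution of the variables $x_1,\dots,x_n$, and $g\circ I$ denotes the image of $I$. *)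

theory Defs
  imports "HOL-Analysis.Analysis" "HOL-Library.Poly_Mapping"
begin

definition is_ideal :: "'a::comm_ring_1 set \<Rightarrow> bool" where
  "is_ideal I \<longleftrightarrow> 0 \<in> I \<and> (\<forall>x\<in>I. \<forall>y\<in>I. x + y \<in> I) \<and> (\<forall>r. \<forall>x\<in>I. r * x \<in> I)"

definition maximal_ideal :: "'a::comm_ring_1 set \<Rightarrow> bool" where
  "maximal_ideal M \<longleftrightarrow> is_ideal M \<and> M \<noteq> UNIV \<and>
     (\<forall>N. is_ideal N \<and> M \<subseteq> N \<and> N \<noteq> UNIV \<longrightarrow> N = M)"

definition local_ring :: "'a::comm_ring_1 itself \<Rightarrow> bool" where
  "local_ring _ \<longleftrightarrow> (\<exists>!M::'a set. maximal_ideal M)"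

definition ring_hom :: "('a::comm_ring_1 \<Rightarrow> 'b::comm_ring_1) \<Rightarrow> bool" where
  "ring_hom f \<longleftrightarrow> f 1 = 1 \<and> (\<forall>x y. f (x + y) = f x + f y) \<and> (\<forall>x y. f (x * y) = f x * f y)"

text \<open>A k-algebra A is given by its structure map iota : k -> A (a ring homomorphism).
  It is finite if it is finite-dimensional as a k-vector space.\<close>
definition finite_algebra :: "('k::field \<Rightarrow> 'a::comm_ring_1) \<Rightarrow> bool" where
  "finite_algebra \<iota> \<longleftrightarrow> ring_hom \<iota> \<and>
     (\<exists>F::'a set. finite F \<and> (\<forall>a. \<exists>c. a = (\<Sum>x\<in>F. \<iota> (c x) * x)))"

definition finite_local_algebra :: "('k::field \<Rightarrow> 'a::comm_ring_1) \<Rightarrow> bool" where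
  "finite_local_algebra \<iota> \<longleftrightarrow> finite_algebra \<iota> \<and> local_ring TYPE('a)"

type_synonym ('n, 'a) mpoly = "('n \<Rightarrow>\<^sub>0 nat) \<Rightarrow>\<^sub>0 'a"

definition mdeg :: "('n \<Rightarrow>\<^sub>0 nat) \<Rightarrow> nat" where
  "mdeg \<alpha> = (\<Sum>i\<in>Poly_Mapping.keys \<alpha>. Poly_Mapping.lookup \<alpha> i)"

definition const :: "'a::comm_ring_1 \<Rightarrow> ('n, 'a) mpoly" where
  "const c = Poly_Mapping.single 0 c"

definition var :: "'n \<Rightarrow> ('n, 'a::comm_ring_1) mpoly" where
  "var i = Poly_Mapping.single (Poly_Mapping.single i 1) 1"

definition smul :: "'a::comm_ring_1 \<Rightarrow> ('n, 'a) mpoly \<Rightarrow> ('n, 'a) mpoly" where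
  "smul a f = const a * f"

definition homog :: "nat \<Rightarrow> ('n, 'a::zero) mpoly \<Rightarrow> bool" where
  "homog d f \<longleftrightarrow> (\<forall>\<alpha>\<in>Poly_Mapping.keys f. mdeg \<alpha> = d)"

definition homog_part :: "nat \<Rightarrow> ('n, 'a::comm_ring_1) mpoly \<Rightarrow> ('n, 'a) mpoly" where
  "homog_part d f = (\<Sum>\<alpha>\<in>Poly_Mapping.keys f. if mdeg \<alpha> = d then Poly_Mapping.single \<alpha> (Poly_Mapping.lookup f \<alpha>) else 0)"

definition graded_submodule :: "('n, 'a::comm_ring_1) mpoly set \<Rightarrow> bool" where
  "graded_submodule I \<longleftrightarrow> 0 \<in> I \<and> (\<forall>f\<in>I. \<forall>g\<in>I. f + g \<in> I) \<and>
     (\<forall>a. \<forall>f\<in>I. smul a f \<in> I) \<and> (\<forall>f\<in>I. \<forall>d. homog_part d f \<in> I)"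

definition deg_part :: "nat \<Rightarrow> ('n, 'a::comm_ring_1) mpoly set \<Rightarrow> ('n, 'a) mpoly set" where
  "deg_part d I = {f\<in>I. homog d f}"

text \<open>(S_A / I)_d is a free A-module: there is a family B in (S_A)_d whose images
  in (S_A)_d / I_d form a basis.\<close>
definition free_quotient_deg :: "nat \<Rightarrow> ('n, 'a::comm_ring_1) mpoly set \<Rightarrow> bool" where
  "free_quotient_deg d I \<longleftrightarrow> (\<exists>B. B \<subseteq> {f. homog d f} \<and>
     (\<forall>f. homog d f \<longrightarrow> (\<exists>F c. finite F \<and> F \<subseteq> B \<and> f - (\<Sum>b\<in>F. smul (c b) b) \<in> deg_part d I)) \<and>
     (\<forall>F c. finite F \<and> F \<subseteq> B \<and> (\<Sum>b\<in>F. smul (c b) b) \<in> deg_part d I \<longrightarrow> (\<forall>b\<in>F. c b = 0)))"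

definition pmap :: "('a::comm_ring_1 \<Rightarrow> 'b::comm_ring_1) \<Rightarrow> ('n, 'a) mpoly \<Rightarrow> ('n, 'b) mpoly" where
  "pmap \<pi> f = Poly_Mapping.map \<pi> f"

text \<open>Action of g in GL_n(A) by A-linear substitution x_i |-> sum_j g_ij x_j.\<close>
definition subst :: "'a::comm_ring_1^'n::finite^'n \<Rightarrow> ('n, 'a) mpoly \<Rightarrow> ('n, 'a) mpoly" where
  "subst g f = (\<Sum>\<alpha>\<in>Poly_Mapping.keys f. const (Poly_Mapping.lookup f \<alpha>) *
      (\<Prod>i\<in>Poly_Mapping.keys \<alpha>. (\<Sum>j\<in>UNIV. const (g $ i $ j) * var j) ^ Poly_Mapping.lookup \<alpha> i))"

text \<open>Apolarity: S_A acting on T (polynomials over k, coefficients pushed into A via iota)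
  by differentiation: x^alpha o y^beta = beta!/(beta-alpha)! y^(beta-alpha) if alpha <= beta, else 0.\<close>
definition mon_le :: "('n \<Rightarrow>\<^sub>0 nat) \<Rightarrow> ('n \<Rightarrow>\<^sub>0 nat) \<Rightarrow> bool" where
  "mon_le \<alpha> \<beta> \<longleftrightarrow> (\<forall>i. Poly_Mapping.lookup \<alpha> i \<le> Poly_Mapping.lookup \<beta> i)"

definition diff_coeff :: "('n \<Rightarrow>\<^sub>0 nat) \<Rightarrow> ('n \<Rightarrow>\<^sub>0 nat) \<Rightarrow> nat" where
  "diff_coeff \<alpha> \<beta> = (\<Prod>i\<in>Poly_Mapping.keys \<beta>. fact (Poly_Mapping.lookup \<beta> i) div fact (Poly_Mapping.lookup \<beta> i - Poly_Mapping.lookup \<alpha> i))"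

definition apolar :: "('k::field \<Rightarrow> 'a::comm_ring_1) \<Rightarrow> ('n, 'a) mpoly \<Rightarrow> ('n, 'k) mpoly \<Rightarrow> ('n, 'a) mpoly" where
  "apolar \<iota> f t = (\<Sum>\<alpha>\<in>Poly_Mapping.keys f. \<Sum>\<beta>\<in>Poly_Mapping.keys t.
      if mon_le \<alpha> \<beta> then Poly_Mapping.single (\<beta> - \<alpha>)
         (Poly_Mapping.lookup f \<alpha> * \<iota> (Poly_Mapping.lookup t \<beta>) * of_nat (diff_coeff \<alpha> \<beta>)) else 0)"

text \<open>q^perp tensor A in degree 2: forms in (S_A)_2 annihilating q.\<close>
definition qperp2 :: "('k::field \<Rightarrow> 'a::comm_ring_1) \<Rightarrow> ('n, 'k) mpoly \<Rightarrow> ('n, 'a) mpoly set" where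
  "qperp2 \<iota> q = {f. homog 2 f \<and> apolar \<iota> f q = 0}"

text \<open>q in T_2 has full rank: its (Hessian) matrix (d_i d_j q) is invertible.\<close>
definition full_rank_quadric :: "('n::finite, 'k::field) mpoly \<Rightarrow> bool" where
  "full_rank_quadric q \<longleftrightarrow> homog 2 q \<and>
     invertible (\<chi> i j. Poly_Mapping.lookup (apolar id (var i * var j) q) 0 :: 'k^'n^'n)"

end

theory Submission
  imports Defs
begin


lemma lookup_map_pm: "Poly_Mapping.lookup (Poly_Mapping.map f p) k = (if Poly_Mapping.lookup p k = 0 then 0 else f (Poly_Mapping.lookup p k))"
  by (simp add: Poly_Mapping.map.rep_eq when_def)

lemma lookup_const_mult: "Poly_Mapping.lookup (const a * p) k = a * Poly_Mapping.lookup p k"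
  unfolding const_def mult_map_scale_conv_mult[symmetric] by (simp add: lookup_map_pm)

lemma mdeg_UNIV: "mdeg (\<alpha>::'n::finite \<Rightarrow>\<^sub>0 nat) = (\<Sum>i\<in>UNIV. Poly_Mapping.lookup \<alpha> i)"
  unfolding mdeg_def by (rule sum.mono_neutral_left) (auto simp: in_keys_iff)

lemma mdeg_add: "mdeg ((\<alpha>::'n::finite \<Rightarrow>\<^sub>0 nat) + \<beta>) = mdeg \<alpha> + mdeg \<beta>"
  by (simp add: mdeg_UNIV lookup_add sum.distrib)

lemma mdeg_single: "mdeg (Poly_Mapping.single (i::'n::finite) (n::nat)) = n"
  by (simp add: mdeg_UNIV lookup_single when_def)

lemma mdeg_zero: "mdeg (0::'n::finite \<Rightarrow>\<^sub>0 nat) = 0"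
  by (simp add: mdeg_UNIV)

lemma mon_le_eq: assumes "mon_le \<alpha> \<beta>" "mdeg (\<alpha>::'n::finite \<Rightarrow>\<^sub>0 nat) = mdeg \<beta>" shows "\<alpha> = \<beta>"
proof (rule poly_mapping_eqI, rule ccontr)
  fix k assume "Poly_Mapping.lookup \<alpha> k \<noteq> Poly_Mapping.lookup \<beta> k"
  with assms(1) have "Poly_Mapping.lookup \<alpha> k < Poly_Mapping.lookup \<beta> k" unfolding mon_le_def
    by (simp add: order_le_neq_trans)
  then have "(\<Sum>i\<in>UNIV. Poly_Mapping.lookup \<alpha> i) < (\<Sum>i\<in>UNIV. Poly_Mapping.lookup \<beta> i)"
    using assms(1) unfolding mon_le_def by (intro sum_strict_mono_ex1) auto
  with assms(2) show False by (simp add: mdeg_UNIV)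
qed

lemma mdeg0: "mdeg (\<alpha>::'n::finite \<Rightarrow>\<^sub>0 nat) = 0 \<Longrightarrow> \<alpha> = 0"
  by (rule poly_mapping_eqI) (simp add: mdeg_UNIV)

lemma mdeg_pos_split: assumes "mdeg (\<alpha>::'n::finite \<Rightarrow>\<^sub>0 nat) = Suc m"
  shows "\<exists>a \<gamma>. \<alpha> = \<gamma> + Poly_Mapping.single a 1 \<and> mdeg \<gamma> = m"
proof -
  have "\<exists>a. Poly_Mapping.lookup \<alpha> a \<noteq> 0"
  proof (rule ccontr)
    assume "\<nexists>a. Poly_Mapping.lookup \<alpha> a \<noteq> 0"
    then have "\<alpha> = 0" by (intro poly_mapping_eqI) auto
    with assms show False by (simp add: mdeg_zero)
  qed
  then obtain a where a: "Poly_Mapping.lookup \<alpha> a \<noteq> 0" by blast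
  define \<gamma> where "\<gamma> = \<alpha> - Poly_Mapping.single a 1"
  have e: "\<alpha> = \<gamma> + Poly_Mapping.single a 1"
    using a by (intro poly_mapping_eqI) (auto simp: \<gamma>_def lookup_add lookup_minus lookup_single when_def)
  then have "mdeg \<alpha> = mdeg \<gamma> + 1" by (simp add: mdeg_add mdeg_single)
  with e assms show ?thesis by auto
qed

lemma mdeg2: assumes "mdeg (\<alpha>::'n::finite \<Rightarrow>\<^sub>0 nat) = 2"
  shows "\<exists>a b. \<alpha> = Poly_Mapping.single a 1 + Poly_Mapping.single b 1"
proof -
  from assms obtain b \<gamma> where 1: "\<alpha> = \<gamma> + Poly_Mapping.single b 1" "mdeg \<gamma> = 1"
    using mdeg_pos_split[of \<alpha> 1] by auto
  from 1(2) obtain a \<delta> where 2: "\<gamma> = \<delta> + Poly_Mapping.single a 1" "mdeg \<delta> = 0"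
    using mdeg_pos_split[of \<gamma> 0] by auto
  show ?thesis using 1 2 mdeg0[of \<delta>] by auto
qed



lemma single_sum: "Poly_Mapping.single k (sum f A) = (\<Sum>x\<in>A. Poly_Mapping.single k (f x))"
  by (induction A rule: infinite_finite_induct) (auto simp: single_add)

definition Pf :: "('k::field \<Rightarrow> 'a::comm_ring_1) \<Rightarrow> ('n, 'k) mpoly \<Rightarrow> ('n, 'a) mpoly \<Rightarrow> 'a" where
  "Pf \<iota> q h = (\<Sum>\<alpha>\<in>Poly_Mapping.keys q. Poly_Mapping.lookup h \<alpha> * \<iota> (Poly_Mapping.lookup q \<alpha>) * of_nat (diff_coeff \<alpha> \<alpha>))"

lemma apolar_homog2:
  fixes h :: "('n::finite, 'a::comm_ring_1) mpoly" and q :: "('n, 'k::field) mpoly"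
  assumes h: "homog 2 h" and q: "homog 2 q"
  shows "apolar \<iota> h q = Poly_Mapping.single 0 (Pf \<iota> q h)"
proof -
  let ?T = "\<lambda>\<alpha>. Poly_Mapping.lookup h \<alpha> * \<iota> (Poly_Mapping.lookup q \<alpha>) * of_nat (diff_coeff \<alpha> \<alpha>)"
  have inner: "(\<Sum>\<beta>\<in>Poly_Mapping.keys q. if mon_le \<alpha> \<beta> then Poly_Mapping.single (\<beta> - \<alpha>)
         (Poly_Mapping.lookup h \<alpha> * \<iota> (Poly_Mapping.lookup q \<beta>) * of_nat (diff_coeff \<alpha> \<beta>)) else 0)
      = (if \<alpha> \<in> Poly_Mapping.keys q then Poly_Mapping.single 0 (?T \<alpha>) else 0)"
    if a: "\<alpha> \<in> Poly_Mapping.keys h" for \<alpha>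
  proof -
    have "(\<Sum>\<beta>\<in>Poly_Mapping.keys q. if mon_le \<alpha> \<beta> then Poly_Mapping.single (\<beta> - \<alpha>)
         (Poly_Mapping.lookup h \<alpha> * \<iota> (Poly_Mapping.lookup q \<beta>) * of_nat (diff_coeff \<alpha> \<beta>)) else 0)
      = (\<Sum>\<beta>\<in>Poly_Mapping.keys q. if \<alpha> = \<beta> then Poly_Mapping.single 0 (?T \<alpha>) else 0)"
    proof (rule sum.cong[OF refl])
      fix \<beta> assume b: "\<beta> \<in> Poly_Mapping.keys q"
      have "mon_le \<alpha> \<beta> \<longleftrightarrow> \<alpha> = \<beta>"
        using mon_le_eq[of \<alpha> \<beta>] a b h q unfolding homog_def mon_le_def by auto
      then show "(if mon_le \<alpha> \<beta> then Poly_Mapping.single (\<beta> - \<alpha>)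
         (Poly_Mapping.lookup h \<alpha> * \<iota> (Poly_Mapping.lookup q \<beta>) * of_nat (diff_coeff \<alpha> \<beta>)) else 0)
         = (if \<alpha> = \<beta> then Poly_Mapping.single 0 (?T \<alpha>) else 0)" by auto
    qed
    also have "\<dots> = (if \<alpha> \<in> Poly_Mapping.keys q then Poly_Mapping.single 0 (?T \<alpha>) else 0)"
      by (simp add: sum.delta)
    finally show ?thesis .
  qed
  have "apolar \<iota> h q = (\<Sum>\<alpha>\<in>Poly_Mapping.keys h. if \<alpha> \<in> Poly_Mapping.keys q then Poly_Mapping.single 0 (?T \<alpha>) else 0)"
    unfolding apolar_def using inner by (rule sum.cong[OF refl])
  also have "\<dots> = (\<Sum>\<alpha>\<in>Poly_Mapping.keys h \<inter> Poly_Mapping.keys q. Poly_Mapping.single 0 (?T \<alpha>))"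
    by (simp add: sum.inter_restrict)
  also have "\<dots> = Poly_Mapping.single 0 (\<Sum>\<alpha>\<in>Poly_Mapping.keys h \<inter> Poly_Mapping.keys q. ?T \<alpha>)"
    by (simp add: single_sum)
  also have "(\<Sum>\<alpha>\<in>Poly_Mapping.keys h \<inter> Poly_Mapping.keys q. ?T \<alpha>) = Pf \<iota> q h"
    unfolding Pf_def by (rule sum.mono_neutral_left) (auto simp: in_keys_iff)
  finally show ?thesis .
qed



lemma homog_zero[simp]: "homog d 0" by (simp add: homog_def)

lemma homog_add: "homog d f \<Longrightarrow> homog d g \<Longrightarrow> homog d (f + g)"
  unfolding homog_def by (meson Un_iff keys_add subsetD)

lemma homog_sum: "(\<And>x. x \<in> A \<Longrightarrow> homog d (f x)) \<Longrightarrow> homog d (sum f A)"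
  by (induction A rule: infinite_finite_induct) (auto intro: homog_add)

lemma keys_const_mult: "Poly_Mapping.keys (const a * f) \<subseteq> Poly_Mapping.keys f"
proof
  fix x assume "x \<in> Poly_Mapping.keys (const a * f)"
  then have "a * Poly_Mapping.lookup f x \<noteq> 0" by (simp add: in_keys_iff lookup_const_mult)
  then show "x \<in> Poly_Mapping.keys f" by (metis in_keys_iff mult_zero_right)
qed

lemma homog_const_mult: "homog d f \<Longrightarrow> homog d (const a * f)"
  unfolding homog_def by (meson keys_const_mult subsetD)

lemma homog_smul: "homog d f \<Longrightarrow> homog d (smul a f)"
  unfolding smul_def by (rule homog_const_mult)

lemma homog_mult: "homog d (f::('n::finite,'a::comm_ring_1) mpoly) \<Longrightarrow> homog e g \<Longrightarrow> homog (d + e) (f * g)"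
  unfolding homog_def using keys_mult[of f g] by (force simp: mdeg_add)

lemma homog_one: "homog 0 (1::('n::finite,'a::comm_ring_1) mpoly)"
  by (simp add: homog_def mdeg_zero)

lemma homog_pow: "homog d (f::('n::finite,'a::comm_ring_1) mpoly) \<Longrightarrow> homog (d * n) (f ^ n)"
proof (induction n)
  case 0 then show ?case by (simp add: homog_one)
next
  case (Suc n)
  have "homog (d + d * n) (f * f ^ n)" by (rule homog_mult[OF Suc.prems Suc.IH[OF Suc.prems]])
  then show ?case by simp
qed

lemma homog_var: "homog 1 (var j :: ('n::finite,'a::comm_ring_1) mpoly)"
  by (simp add: homog_def var_def mdeg_single)

lemma homog_prod:
  assumes "\<And>i. homog 1 (L i :: ('n::finite,'a::comm_ring_1) mpoly)"
  shows "homog (\<Sum>i\<in>K. e i) (\<Prod>i\<in>K. L i ^ e i)"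
proof (induction K rule: infinite_finite_induct)
  case (insert x F)
  have h1: "homog (e x) (L x ^ e x)" using homog_pow[OF assms[of x], of "e x"] by simp
  have "homog (e x + sum e F) (L x ^ e x * (\<Prod>i\<in>F. L i ^ e i))"
    by (rule homog_mult[OF h1 insert.IH])
  then show ?case using insert.hyps by simp
qed (auto simp: homog_one)

lemma poly_expand: "p = (\<Sum>\<beta>\<in>Poly_Mapping.keys p. Poly_Mapping.single \<beta> (Poly_Mapping.lookup p \<beta>))"
proof (rule poly_mapping_eqI)
  fix k
  have "Poly_Mapping.lookup (\<Sum>\<beta>\<in>Poly_Mapping.keys p. Poly_Mapping.single \<beta> (Poly_Mapping.lookup p \<beta>)) k
     = (\<Sum>\<beta>\<in>Poly_Mapping.keys p. if \<beta> = k then Poly_Mapping.lookup p \<beta> else 0)"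
    by (simp add: lookup_sum lookup_single when_def)
  also have "\<dots> = (if k \<in> Poly_Mapping.keys p then Poly_Mapping.lookup p k else 0)"
    by (rule sum.delta[OF finite_keys])
  also have "\<dots> = Poly_Mapping.lookup p k" by (simp add: in_keys_iff)
  finally show "Poly_Mapping.lookup p k = Poly_Mapping.lookup (\<Sum>\<beta>\<in>Poly_Mapping.keys p. Poly_Mapping.single \<beta> (Poly_Mapping.lookup p \<beta>)) k" by simp
qed

definition cq :: "('k::field \<Rightarrow> 'a::comm_ring_1) \<Rightarrow> ('n, 'k) mpoly \<Rightarrow> ('n \<Rightarrow>\<^sub>0 nat) \<Rightarrow> 'a" where
  "cq \<iota> q \<beta> = (if \<beta> \<in> Poly_Mapping.keys q then \<iota> (Poly_Mapping.lookup q \<beta>) * of_nat (diff_coeff \<beta> \<beta>) else 0)"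

lemma Pf_alt: assumes "finite S" "Poly_Mapping.keys h \<subseteq> S"
  shows "Pf \<iota> q h = (\<Sum>\<beta>\<in>S. Poly_Mapping.lookup h \<beta> * cq \<iota> q \<beta>)"
proof -
  have "Pf \<iota> q h = (\<Sum>\<alpha>\<in>Poly_Mapping.keys q \<inter> S. Poly_Mapping.lookup h \<alpha> * \<iota> (Poly_Mapping.lookup q \<alpha>) * of_nat (diff_coeff \<alpha> \<alpha>))"
    unfolding Pf_def using assms by (intro sum.mono_neutral_right) (auto, metis in_keys_iff mult_zero_left subsetD)
  also have "\<dots> = (\<Sum>\<beta>\<in>S. Poly_Mapping.lookup h \<beta> * cq \<iota> q \<beta>)"
    unfolding Int_commute[of _ S] sum.inter_restrict[OF assms(1)]
    by (rule sum.cong[OF refl]) (simp add: cq_def mult.assoc)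
  finally show ?thesis .
qed

lemma Pf_single: "Pf \<iota> q (Poly_Mapping.single \<beta> c) = c * cq \<iota> q \<beta>"
  by (subst Pf_alt[of "{\<beta>}"]) auto

lemma Pf_add: "Pf \<iota> q (f + g) = Pf \<iota> q f + Pf \<iota> q g"
  unfolding Pf_def by (simp add: lookup_add algebra_simps sum.distrib)

lemma Pf_zero[simp]: "Pf \<iota> q 0 = 0"
  unfolding Pf_def by simp

lemma Pf_sum: "Pf \<iota> q (sum f A) = (\<Sum>x\<in>A. Pf \<iota> q (f x))"
  by (induction A rule: infinite_finite_induct) (auto simp: Pf_add)

lemma Pf_const_mult: "Pf \<iota> q (const a * f) = a * Pf \<iota> q f"
  unfolding Pf_def by (simp add: lookup_const_mult sum_distrib_left mult.assoc)

lemma Pf_smul: "Pf \<iota> q (smul a f) = a * Pf \<iota> q f"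
  unfolding smul_def by (rule Pf_const_mult)

lemma Pf_diff: "Pf \<iota> q (f - g) = Pf \<iota> q f - Pf \<iota> q g"
  unfolding Pf_def by (simp add: lookup_minus algebra_simps sum_subtractf)



definition Lg :: "'a::comm_ring_1^'n::finite^'n \<Rightarrow> 'n \<Rightarrow> ('n, 'a) mpoly" where
  "Lg g i = (\<Sum>j\<in>UNIV. const (g $ i $ j) * var j)"

definition mmono :: "'a::comm_ring_1^'n::finite^'n \<Rightarrow> ('n \<Rightarrow>\<^sub>0 nat) \<Rightarrow> ('n, 'a) mpoly" where
  "mmono g \<alpha> = (\<Prod>i\<in>Poly_Mapping.keys \<alpha>. Lg g i ^ Poly_Mapping.lookup \<alpha> i)"

lemma subst_eq: "subst g f = (\<Sum>\<alpha>\<in>Poly_Mapping.keys f. const (Poly_Mapping.lookup f \<alpha>) * mmono g \<alpha>)"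
  unfolding subst_def mmono_def Lg_def ..

lemma homog_Lg: "homog 1 (Lg g i)"
  unfolding Lg_def by (intro homog_sum homog_const_mult homog_var)

lemma homog_mono: "homog (mdeg \<alpha>) (mmono g \<alpha>)"
  unfolding mmono_def mdeg_def by (rule homog_prod[OF homog_Lg])

lemma const_mult_const: "const a * const b = (const (a * b) :: ('n, 'a::comm_ring_1) mpoly)"
  by (simp add: const_def mult_single)

lemma mono2: "mmono g (Poly_Mapping.single a 1 + Poly_Mapping.single b 1) = Lg g a * Lg g b"
proof (cases "a = b")
  case True
  have e: "Poly_Mapping.single a 1 + Poly_Mapping.single a 1 = Poly_Mapping.single a (2::nat)"
    by (metis one_add_one single_add)
  have "mmono g (Poly_Mapping.single a 1 + Poly_Mapping.single b 1) = mmono g (Poly_Mapping.single a 2)"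
    using True e by metis
  also have "\<dots> = Lg g a * Lg g a" unfolding mmono_def by (simp add: power2_eq_square)
  finally show ?thesis using True by simp
next
  case False
  let ?\<alpha> = "Poly_Mapping.single a 1 + Poly_Mapping.single b (1::nat)"
  have k: "Poly_Mapping.keys ?\<alpha> = {a, b}"
    by (auto simp: in_keys_iff lookup_add lookup_single when_def split: if_splits)
  show ?thesis using False unfolding mmono_def k by (simp add: lookup_add lookup_single when_def)
qed

lemma Pf_LL: "Pf \<iota> q (Lg g a * Lg g b) = (\<Sum>j\<in>UNIV. \<Sum>k\<in>UNIV. g $ a $ j * g $ b $ k * Pf \<iota> q (var j * var k))"
proof -
  have "Lg g a * Lg g b = (\<Sum>j\<in>UNIV. \<Sum>k\<in>UNIV. const (g $ a $ j * g $ b $ k) * (var j * var k))"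
    unfolding Lg_def sum_product
    by (intro sum.cong refl) (simp add: const_mult_const[symmetric] algebra_simps)
  then show ?thesis by (simp add: Pf_sum Pf_const_mult)
qed



lemma hom_add_aux: "ring_hom f \<Longrightarrow> f (x + y) = f x + f y"
  unfolding ring_hom_def by blast

lemma hom0: "ring_hom f \<Longrightarrow> f 0 = 0"
proof -
  assume h: "ring_hom f"
  have "f 0 + f 0 = f 0 + 0" by (metis hom_add_aux[OF h] add_0_right)
  then show ?thesis by (rule add_left_imp_eq)
qed

lemma hom_add: "ring_hom f \<Longrightarrow> f (x + y) = f x + f y"
  unfolding ring_hom_def by blast

lemma hom_mult: "ring_hom f \<Longrightarrow> f (x * y) = f x * f y"
  unfolding ring_hom_def by blast

lemma hom_one: "ring_hom f \<Longrightarrow> f 1 = 1"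
  unfolding ring_hom_def by blast

lemma hom_uminus: "ring_hom f \<Longrightarrow> f (- x) = - f x"
proof -
  assume h: "ring_hom f"
  have "f (- x + x) = f (- x) + f x" by (rule hom_add[OF h])
  then have "f (- x) + f x = 0" by (metis add.left_inverse hom0[OF h])
  then show ?thesis by (metis eq_neg_iff_add_eq_0)
qed

lemma hom_diff: assumes h: "ring_hom f" shows "f (x - y) = f x - f y"
proof -
  have "f (x - y) = f (x + - y)" by simp
  also have "\<dots> = f x + f (- y)" by (rule hom_add[OF h])
  also have "\<dots> = f x - f y" by (simp add: hom_uminus[OF h])
  finally show ?thesis .
qed

lemma hom_sum: assumes h: "ring_hom f" shows "f (sum g A) = (\<Sum>x\<in>A. f (g x))"
  by (induction A rule: infinite_finite_induct) (auto simp: hom0[OF h] hom_add[OF h])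

lemma hom_of_nat: assumes h: "ring_hom f" shows "f (of_nat n) = of_nat n"
  by (induction n) (auto simp: hom0[OF h] hom_add[OF h] hom_one[OF h])

lemma pi_Pf:
  assumes hom: "ring_hom \<pi>" and compat: "\<forall>c. \<pi> (\<iota> c) = \<iota>' c"
  shows "\<pi> (Pf \<iota> q h) = Pf \<iota>' q (pmap \<pi> h)"
proof -
  have l: "Poly_Mapping.lookup (pmap \<pi> h) \<alpha> = \<pi> (Poly_Mapping.lookup h \<alpha>)" for \<alpha>
    by (simp add: pmap_def lookup_map_pm hom0[OF hom])
  show ?thesis unfolding Pf_def hom_sum[OF hom]
  proof (rule sum.cong[OF refl])
    fix \<alpha>
    show "\<pi> (Poly_Mapping.lookup h \<alpha> * \<iota> (Poly_Mapping.lookup q \<alpha>) * of_nat (diff_coeff \<alpha> \<alpha>)) =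
      Poly_Mapping.lookup (pmap \<pi> h) \<alpha> * \<iota>' (Poly_Mapping.lookup q \<alpha>) * of_nat (diff_coeff \<alpha> \<alpha>)"
      unfolding hom_mult[OF hom] hom_of_nat[OF hom] l compat[rule_format] ..
  qed
qed

lemma lookup_homog_part:
  "Poly_Mapping.lookup (homog_part d f) \<alpha> = (if mdeg \<alpha> = d then Poly_Mapping.lookup f \<alpha> else 0)"
proof -
  have "Poly_Mapping.lookup (homog_part d f) \<alpha> = (\<Sum>\<beta>\<in>Poly_Mapping.keys f. if \<beta> = \<alpha> then (if mdeg \<alpha> = d then Poly_Mapping.lookup f \<alpha> else 0) else 0)"
    unfolding homog_part_def lookup_sum by (rule sum.cong) (auto simp: lookup_single when_def)
  also have "\<dots> = (if \<alpha> \<in> Poly_Mapping.keys f then (if mdeg \<alpha> = d then Poly_Mapping.lookup f \<alpha> else 0) else 0)"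
    by (rule sum.delta[OF finite_keys])
  also have "\<dots> = (if mdeg \<alpha> = d then Poly_Mapping.lookup f \<alpha> else 0)"
    by (auto simp: in_keys_iff)
  finally show ?thesis .
qed

lemma keys_homog_part: "Poly_Mapping.keys (homog_part d f) = {\<alpha>\<in>Poly_Mapping.keys f. mdeg \<alpha> = d}"
  by (auto simp: in_keys_iff lookup_homog_part split: if_splits)

lemma homog_homog_part: "homog d (homog_part d f)"
  by (simp add: homog_def keys_homog_part)

lemma smul_add: "smul a (x + y) = smul a x + smul a y"
  by (simp add: smul_def distrib_left)

lemma smul_sum: "smul a (sum f A) = (\<Sum>x\<in>A. smul a (f x))"
  by (simp add: smul_def sum_distrib_left)

lemma smul_smul: "smul a (smul b x) = smul (a * b) (x::('n,'a::comm_ring_1) mpoly)"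
  by (simp add: smul_def mult.assoc[symmetric] const_mult_const)

lemma smul_zero_left[simp]: "smul 0 x = 0"
  by (simp add: smul_def const_def)

lemma smul_sum_left: "smul (sum c A) x = (\<Sum>a\<in>A. smul (c a) x)"
  by (simp add: smul_def const_def single_sum sum_distrib_right)

lemma smul_minus1: "smul (-1) x = - x"
  by (simp add: smul_def const_def single_uminus)

lemma smul_single: "smul a (Poly_Mapping.single \<beta> 1) = Poly_Mapping.single \<beta> a"
  by (simp add: smul_def const_def mult_single)

context fixes I :: "('n::finite, 'a::comm_ring_1) mpoly set" assumes Igr: "graded_submodule I"
begin

lemma dp_add: "x \<in> deg_part d I \<Longrightarrow> y \<in> deg_part d I \<Longrightarrow> x + y \<in> deg_part d I"
  using Igr unfolding graded_submodule_def deg_part_def by (auto intro: homog_add)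

lemma dp_smul: "x \<in> deg_part d I \<Longrightarrow> smul a x \<in> deg_part d I"
  using Igr unfolding graded_submodule_def deg_part_def by (auto intro: homog_smul)

lemma dp_zero: "0 \<in> deg_part d I"
  using Igr unfolding graded_submodule_def deg_part_def by auto

lemma dp_sum: "(\<And>x. x \<in> A \<Longrightarrow> f x \<in> deg_part d I) \<Longrightarrow> sum f A \<in> deg_part d I"
  by (induction A rule: infinite_finite_induct) (auto intro: dp_add dp_zero)

lemma dp_diff: "x \<in> deg_part d I \<Longrightarrow> y \<in> deg_part d I \<Longrightarrow> x - y \<in> deg_part d I"
  using dp_add[OF _ dp_smul[of y d "-1"]] by (simp add: smul_minus1)

end

lemma mat_mult_add_left: "((A::'a::comm_ring_1^'n::finite^'n) + B) ** C = A ** C + B ** C"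
  by (simp add: matrix_matrix_mult_def vec_eq_iff algebra_simps sum.distrib)

lemma mat_mult_diff_right: "(A::'a::comm_ring_1^'n::finite^'n) ** (B - C) = A ** B - A ** C"
  by (simp add: matrix_matrix_mult_def vec_eq_iff algebra_simps sum_subtractf)

lemma mat_mult_diff_left: "((A::'a::comm_ring_1^'n::finite^'n) - B) ** C = A ** C - B ** C"
  by (simp add: matrix_matrix_mult_def vec_eq_iff algebra_simps sum_subtractf)

lemma inv_nil:
  fixes E :: "'a::comm_ring_1^'n::finite^'n"
  assumes "\<And>i j k l. E$i$j * E$k$l = 0"
  shows "invertible (mat 1 + E)"
proof -
  have EE: "E ** E = 0" using assms by (simp add: matrix_matrix_mult_def vec_eq_iff)
  have "(mat 1 + E) ** (mat 1 - E) = mat 1"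
    by (simp add: mat_mult_add_left mat_mult_diff_right EE)
  moreover have "(mat 1 - E) ** (mat 1 + E) = mat 1"
    by (simp add: mat_mult_diff_left matrix_add_ldistrib EE)
  ultimately show ?thesis unfolding invertible_def by blast
qed



lemma var_mult: "var j * var k = (Poly_Mapping.single (Poly_Mapping.single j 1 + Poly_Mapping.single k 1) 1 :: ('n, 'a::comm_ring_1) mpoly)"
  by (simp add: var_def mult_single)

lemma mdeg_jk: "mdeg (Poly_Mapping.single (j::'n::finite) 1 + Poly_Mapping.single k 1) = 2"
  by (simp add: mdeg_add mdeg_single)

lemma homog_single_deg: "mdeg \<beta> = d \<Longrightarrow> homog d (Poly_Mapping.single \<beta> c)"
  by (simp add: homog_def)

lemma Pf_vv: "Pf \<iota> q (var j * var k) = cq \<iota> q (Poly_Mapping.single (j::'n::finite) 1 + Poly_Mapping.single k 1)"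
  unfolding var_mult Pf_single by simp

lemma H_entry:
  assumes qh: "homog 2 (q::('n::finite,'k::field) mpoly)"
  shows "Poly_Mapping.lookup (apolar id (var j * var k) q) 0 = cq id q (Poly_Mapping.single j 1 + Poly_Mapping.single k 1)"
proof -
  have "homog 2 (var j * var k :: ('n,'k) mpoly)" unfolding var_mult by (rule homog_single_deg[OF mdeg_jk])
  from apolar_homog2[OF this qh, of id] show ?thesis by (simp add: Pf_vv)
qed

lemma cq_hom: assumes h: "ring_hom \<iota>" shows "cq \<iota> q \<gamma> = \<iota> (cq id q \<gamma>)"
  unfolding cq_def by (simp add: hom_mult[OF h] hom_of_nat[OF h] hom0[OF h])

theorem theorem2p4:
  fixes q :: "('n::finite, 'k::field_char_0) mpoly"
    and \<iota> :: "'k \<Rightarrow> 'a::comm_ring_1" and \<iota>' :: "'k \<Rightarrow> 'b::comm_ring_1"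
    and \<pi> :: "'a \<Rightarrow> 'b"
    and I :: "('n, 'a) mpoly set" and I' :: "('n, 'b) mpoly set"
  assumes q: "full_rank_quadric q"
    and A: "finite_local_algebra \<iota>" and A': "finite_local_algebra \<iota>'"
    and hom: "ring_hom \<pi>" and compat: "\<forall>c. \<pi> (\<iota> c) = \<iota>' c" and surj: "surj \<pi>"
    and J2: "\<forall>x y. \<pi> x = 0 \<and> \<pi> y = 0 \<longrightarrow> x * y = 0"
    and I'gr: "graded_submodule I'" and Igr: "graded_submodule I"
    and h1: "deg_part 2 I' \<subseteq> qperp2 \<iota>' q"
    and h2: "free_quotient_deg 2 I"
    and h3: "pmap \<pi> ` deg_part 2 I = deg_part 2 I'"
  shows "\<exists>g::'a^'n^'n. invertible g \<and> (\<forall>i j. \<pi> (g $ i $ j - mat 1 $ i $ j) = 0) \<and>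
           deg_part 2 (subst g ` I) \<subseteq> qperp2 \<iota> q"
proof -
  have iota: "ring_hom \<iota>" using A unfolding finite_local_algebra_def finite_algebra_def by simp
  have qh: "homog 2 q" using q unfolding full_rank_quadric_def by simp
  define H :: "'k^'n^'n" where "H = (\<chi> i j. Poly_Mapping.lookup (apolar id (var i * var j) q) 0)"
  have "invertible H" using q unfolding full_rank_quadric_def H_def by simp
  then obtain Hinv :: "'k^'n^'n" where HiH: "Hinv ** H = mat 1" unfolding invertible_def by blast
  define Hp where "Hp j k = Pf \<iota> q (var j * var k)" for j k
  have HpH: "Hp j k = \<iota> (H$j$k)" for j k
    unfolding Hp_def H_def Pf_vv H_entry[OF qh] by (simp add: cq_hom[OF iota])
  have Hpsym: "Hp j k = Hp k j" for j k by (simp add: Hp_def mult.commute)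
  define Hi where "Hi k j = \<iota> (Hinv$k$j)" for k j
  have HiHp: "(\<Sum>j\<in>UNIV. Hi k j * Hp j b) = (if k = b then 1 else 0)" for k b
  proof -
    have "(\<Sum>j\<in>UNIV. Hi k j * Hp j b) = \<iota> (\<Sum>j\<in>UNIV. Hinv$k$j * H$j$b)"
      by (simp add: Hi_def HpH hom_sum[OF iota] hom_mult[OF iota])
    also have "(\<Sum>j\<in>UNIV. Hinv$k$j * H$j$b) = (Hinv ** H)$k$b" by (simp add: matrix_matrix_mult_def)
    also have "\<dots> = (if k = b then 1 else 0)" by (simp add: HiH mat_def)
    finally show ?thesis by (simp add: hom_one[OF iota] hom0[OF iota])
  qed

  from h2[unfolded free_quotient_deg_def] obtain B where Bc: "B \<subseteq> {f. homog 2 f} \<and>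
     (\<forall>f. homog 2 f \<longrightarrow> (\<exists>F c. finite F \<and> F \<subseteq> B \<and> f - (\<Sum>b\<in>F. smul (c b) b) \<in> deg_part 2 I)) \<and>
     (\<forall>F c. finite F \<and> F \<subseteq> B \<and> (\<Sum>b\<in>F. smul (c b) b) \<in> deg_part 2 I \<longrightarrow> (\<forall>b\<in>F. c b = 0))" ..
  have Bsp: "\<forall>f. homog 2 f \<longrightarrow> (\<exists>F c. finite F \<and> F \<subseteq> B \<and> f - (\<Sum>b\<in>F. smul (c b) b) \<in> deg_part 2 I)"
    using Bc by (rule conjunct1[OF conjunct2])
  have Bind: "\<forall>F c. finite F \<and> F \<subseteq> B \<and> (\<Sum>b\<in>F. smul (c b) b) \<in> deg_part 2 I \<longrightarrow> (\<forall>b\<in>F. c b = 0)"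
    using Bc by (rule conjunct2[OF conjunct2])
  have "\<forall>\<beta>. \<exists>F c. mdeg \<beta> = 2 \<longrightarrow> finite F \<and> F \<subseteq> B \<and> Poly_Mapping.single \<beta> 1 - (\<Sum>b\<in>F. smul (c b) b) \<in> deg_part 2 I"
  proof
    fix \<beta> show "\<exists>F c. mdeg \<beta> = 2 \<longrightarrow> finite F \<and> F \<subseteq> B \<and> Poly_Mapping.single \<beta> 1 - (\<Sum>b\<in>F. smul (c b) b) \<in> deg_part 2 I"
    proof (cases "mdeg \<beta> = 2")
      case True
      then have "homog 2 (Poly_Mapping.single \<beta> (1::'a))" by (rule homog_single_deg)
      then show ?thesis using Bsp by blast
    qed simp
  qed
  from choice[OF this] obtain Fs where "\<forall>\<beta>. \<exists>c. mdeg \<beta> = 2 \<longrightarrow> finite (Fs \<beta>) \<and> Fs \<beta> \<subseteq> B \<and> Poly_Mapping.single \<beta> 1 - (\<Sum>b\<in>Fs \<beta>. smul (c b) b) \<in> deg_part 2 I" ..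
  from choice[OF this] obtain cs where FC: "\<forall>\<beta>. mdeg \<beta> = 2 \<longrightarrow> finite (Fs \<beta>) \<and> Fs \<beta> \<subseteq> B \<and>
      Poly_Mapping.single \<beta> 1 - (\<Sum>b\<in>Fs \<beta>. smul (cs \<beta> b) b) \<in> deg_part 2 I" ..
  define i\<beta> where "i\<beta> \<beta> = Poly_Mapping.single \<beta> 1 - (\<Sum>b\<in>Fs \<beta>. smul (cs \<beta> b) b)" for \<beta>
  define N where "N \<beta> = Pf \<iota> q (i\<beta> \<beta>)" for \<beta>
  have piP: "\<pi> (Pf \<iota> q i) = 0" if i: "i \<in> deg_part 2 I" for i
  proof -
    have "pmap \<pi> i \<in> deg_part 2 I'" using h3 i by blast
    then have "pmap \<pi> i \<in> qperp2 \<iota>' q" using h1 by blast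
    then have hh: "homog 2 (pmap \<pi> i)" "apolar \<iota>' (pmap \<pi> i) q = 0" by (auto simp: qperp2_def)
    have "Poly_Mapping.single (0::'n \<Rightarrow>\<^sub>0 nat) (Pf \<iota>' q (pmap \<pi> i)) = 0" using apolar_homog2[OF hh(1) qh, of \<iota>'] hh(2) by simp
    then have "Pf \<iota>' q (pmap \<pi> i) = 0" by (metis lookup_single_eq lookup_zero)
    then show "\<pi> (Pf \<iota> q i) = 0" using pi_Pf[OF hom compat, of q i] by simp
  qed
  have piN: "\<pi> (N \<beta>) = 0" if "mdeg \<beta> = 2" for \<beta>
    using piP FC that by (simp add: N_def i\<beta>_def)
  have keyN: "Pf \<iota> q f2 = (\<Sum>\<beta>\<in>Poly_Mapping.keys f2. Poly_Mapping.lookup f2 \<beta> * N \<beta>)"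
    if f2: "f2 \<in> deg_part 2 I" for f2
  proof -
    let ?K = "Poly_Mapping.keys f2"
    have Kdeg: "mdeg \<beta> = 2" if "\<beta> \<in> ?K" for \<beta> using f2 that by (auto simp: deg_part_def homog_def)
    have iI: "i\<beta> \<beta> \<in> deg_part 2 I" if "\<beta> \<in> ?K" for \<beta> using FC Kdeg[OF that] by (simp add: i\<beta>_def)
    define S where "S = (\<Sum>\<beta>\<in>?K. smul (Poly_Mapping.lookup f2 \<beta>) (\<Sum>b\<in>Fs \<beta>. smul (cs \<beta> b) b))"
    have exp: "f2 = (\<Sum>\<beta>\<in>?K. smul (Poly_Mapping.lookup f2 \<beta>) (i\<beta> \<beta>)) + S"
    proof -
      have "f2 = (\<Sum>\<beta>\<in>?K. Poly_Mapping.single \<beta> (Poly_Mapping.lookup f2 \<beta>))" by (rule poly_expand)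
      also have "\<dots> = (\<Sum>\<beta>\<in>?K. smul (Poly_Mapping.lookup f2 \<beta>) (Poly_Mapping.single \<beta> 1))"
        by (simp add: smul_single)
      also have "\<dots> = (\<Sum>\<beta>\<in>?K. smul (Poly_Mapping.lookup f2 \<beta>) (i\<beta> \<beta>) + smul (Poly_Mapping.lookup f2 \<beta>) (\<Sum>b\<in>Fs \<beta>. smul (cs \<beta> b) b))"
        by (rule sum.cong) (simp_all add: i\<beta>_def smul_add[symmetric])
      also have "\<dots> = (\<Sum>\<beta>\<in>?K. smul (Poly_Mapping.lookup f2 \<beta>) (i\<beta> \<beta>)) + S"
        by (simp add: S_def sum.distrib)
      finally show ?thesis .
    qed
    have "S = f2 - (\<Sum>\<beta>\<in>?K. smul (Poly_Mapping.lookup f2 \<beta>) (i\<beta> \<beta>))"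
      using exp by (metis add_diff_cancel_left')
    then have SI: "S \<in> deg_part 2 I"
      using dp_diff[OF Igr f2 dp_sum[OF Igr dp_smul[OF Igr iI]]] by simp
    define G where "G = (\<Union>\<beta>\<in>?K. Fs \<beta>)"
    have finG: "finite G" and GB: "G \<subseteq> B" using FC Kdeg by (auto simp: G_def)
    define dc where "dc b = (\<Sum>\<beta>\<in>?K. if b \<in> Fs \<beta> then Poly_Mapping.lookup f2 \<beta> * cs \<beta> b else 0)" for b
    have Sre: "S = (\<Sum>b\<in>G. smul (dc b) b)"
    proof -
      have "S = (\<Sum>\<beta>\<in>?K. \<Sum>b\<in>Fs \<beta>. smul (Poly_Mapping.lookup f2 \<beta> * cs \<beta> b) b)"
        by (simp add: S_def smul_sum smul_smul)
      also have "\<dots> = (\<Sum>\<beta>\<in>?K. \<Sum>b\<in>G. smul (if b \<in> Fs \<beta> then Poly_Mapping.lookup f2 \<beta> * cs \<beta> b else 0) b)"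
      proof (rule sum.cong[OF refl])
        fix \<beta> assume \<beta>: "\<beta> \<in> ?K"
        have sub: "Fs \<beta> \<subseteq> G" using \<beta> by (auto simp: G_def)
        show "(\<Sum>b\<in>Fs \<beta>. smul (Poly_Mapping.lookup f2 \<beta> * cs \<beta> b) b) =
          (\<Sum>b\<in>G. smul (if b \<in> Fs \<beta> then Poly_Mapping.lookup f2 \<beta> * cs \<beta> b else 0) b)"
          by (rule sum.mono_neutral_cong_left[OF finG sub]) auto
      qed
      also have "\<dots> = (\<Sum>b\<in>G. \<Sum>\<beta>\<in>?K. smul (if b \<in> Fs \<beta> then Poly_Mapping.lookup f2 \<beta> * cs \<beta> b else 0) b)"
        by (rule sum.swap)
      also have "\<dots> = (\<Sum>b\<in>G. smul (dc b) b)" by (simp add: dc_def smul_sum_left)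
      finally show ?thesis .
    qed
    have "\<forall>b\<in>G. dc b = 0" using Bind finG GB SI Sre by blast
    then have "S = 0" using Sre by simp
    then have "f2 = (\<Sum>\<beta>\<in>?K. smul (Poly_Mapping.lookup f2 \<beta>) (i\<beta> \<beta>))" using exp by simp
    then have "Pf \<iota> q f2 = Pf \<iota> q (\<Sum>\<beta>\<in>?K. smul (Poly_Mapping.lookup f2 \<beta>) (i\<beta> \<beta>))" by (rule arg_cong)
    also have "\<dots> = (\<Sum>\<beta>\<in>?K. Poly_Mapping.lookup f2 \<beta> * N \<beta>)" by (simp add: Pf_sum Pf_smul N_def)
    finally show ?thesis .
  qed
  define M where "M a b = N (Poly_Mapping.single a 1 + Poly_Mapping.single b 1)" for a b
  have Msym: "M a b = M b a" for a b by (simp add: M_def add.commute)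
  have piM: "\<pi> (M a b) = 0" for a b using piN[OF mdeg_jk] by (simp add: M_def)
  define d where "d = - \<iota> (1/2)"
  have dd: "d + d = -1"
  proof -
    have "\<iota> (1/2) + \<iota> (1/2) = \<iota> (1/2 + 1/2)" by (rule hom_add[OF iota, symmetric])
    also have "\<dots> = 1" by (simp add: hom_one[OF iota])
    finally show ?thesis unfolding d_def by (metis minus_add_distrib)
  qed
  define E where "E a j = d * (\<Sum>k\<in>UNIV. M a k * Hi k j)" for a j
  have piE: "\<pi> (E a j) = 0" for a j
    by (simp add: E_def hom_mult[OF hom] hom_sum[OF hom] piM)
  have EE: "E a j * E b k = 0" for a j b k using J2 piE by blast
  have EHp: "(\<Sum>j\<in>UNIV. E a j * Hp j b) = d * M a b" for a b
  proof -
    have "(\<Sum>j\<in>UNIV. E a j * Hp j b) = (\<Sum>j\<in>UNIV. \<Sum>k\<in>UNIV. d * (M a k * (Hi k j * Hp j b)))"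
      by (simp add: E_def sum_distrib_right sum_distrib_left mult.assoc)
    also have "\<dots> = (\<Sum>k\<in>UNIV. \<Sum>j\<in>UNIV. d * (M a k * (Hi k j * Hp j b)))" by (rule sum.swap)
    also have "\<dots> = (\<Sum>k\<in>UNIV. d * (M a k * (\<Sum>j\<in>UNIV. Hi k j * Hp j b)))"
      by (simp add: sum_distrib_left)
    also have "\<dots> = (\<Sum>k\<in>UNIV. d * (M a k * (if k = b then 1 else 0)))" by (simp add: HiHp)
    also have "\<dots> = d * M a b" by (simp add: if_distrib cong: if_cong)
    finally show ?thesis .
  qed
  define g :: "'a^'n^'n" where "g = mat 1 + (\<chi> i j. E i j)"
  have gE: "g $ i $ j = (if i = j then 1 else 0) + E i j" for i j by (simp add: g_def mat_def)
  have LL: "(\<Sum>j\<in>UNIV. \<Sum>k\<in>UNIV. g$a$j * g$b$k * Hp j k) = Hp a b - M a b" for a b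
  proof -
    have t: "g$a$j * g$b$k * Hp j k = (if a = j then (if b = k then Hp j k else 0) else 0)
        + (if a = j then E b k * Hp j k else 0) + (if b = k then E a j * Hp j k else 0)
        + E a j * E b k * Hp j k" for j k
      by (cases "a = j"; cases "b = k") (simp_all add: gE algebra_simps)
    have S1: "(\<Sum>j\<in>UNIV. \<Sum>k\<in>UNIV. (if a = j then (if b = k then Hp j k else 0) else 0)) = Hp a b"
    proof -
      have "(\<Sum>j\<in>UNIV. \<Sum>k\<in>UNIV. (if a = j then (if b = k then Hp j k else 0) else 0))
          = (\<Sum>j\<in>UNIV. if a = j then Hp j b else 0)"
        by (rule sum.cong[OF refl]) (simp add: sum.delta)
      also have "\<dots> = Hp a b" by (simp add: sum.delta)
      finally show ?thesis .
    qed
    have S2: "(\<Sum>j\<in>UNIV. \<Sum>k\<in>UNIV. (if a = j then E b k * Hp j k else 0)) = d * M a b"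
    proof -
      have "(\<Sum>j\<in>UNIV. \<Sum>k\<in>UNIV. (if a = j then E b k * Hp j k else 0))
          = (\<Sum>j\<in>UNIV. if a = j then (\<Sum>k\<in>UNIV. E b k * Hp j k) else 0)"
        by (rule sum.cong[OF refl]) simp
      also have "\<dots> = (\<Sum>k\<in>UNIV. E b k * Hp a k)" by (simp add: sum.delta)
      also have "\<dots> = (\<Sum>k\<in>UNIV. E b k * Hp k a)" by (simp add: Hpsym)
      also have "\<dots> = d * M a b" by (simp add: EHp Msym)
      finally show ?thesis .
    qed
    have S3: "(\<Sum>j\<in>UNIV. \<Sum>k\<in>UNIV. (if b = k then E a j * Hp j k else 0)) = d * M a b"
    proof -
      have "(\<Sum>j\<in>UNIV. \<Sum>k\<in>UNIV. (if b = k then E a j * Hp j k else 0)) = (\<Sum>j\<in>UNIV. E a j * Hp j b)"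
        by (rule sum.cong[OF refl]) (simp add: sum.delta)
      also have "\<dots> = d * M a b" by (rule EHp)
      finally show ?thesis .
    qed
    have S4: "(\<Sum>j\<in>UNIV. \<Sum>k\<in>UNIV. E a j * E b k * Hp j k) = 0" by (simp add: EE)
    have "(\<Sum>j\<in>UNIV. \<Sum>k\<in>UNIV. g$a$j * g$b$k * Hp j k) =
        (\<Sum>j\<in>UNIV. \<Sum>k\<in>UNIV. (if a = j then (if b = k then Hp j k else 0) else 0))
      + (\<Sum>j\<in>UNIV. \<Sum>k\<in>UNIV. (if a = j then E b k * Hp j k else 0))
      + (\<Sum>j\<in>UNIV. \<Sum>k\<in>UNIV. (if b = k then E a j * Hp j k else 0))
      + (\<Sum>j\<in>UNIV. \<Sum>k\<in>UNIV. E a j * E b k * Hp j k)"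
      unfolding t by (simp add: sum.distrib)
    also have "\<dots> = Hp a b + (d + d) * M a b" unfolding S1 S2 S3 S4 by (simp add: algebra_simps)
    also have "\<dots> = Hp a b - M a b" by (simp add: dd)
    finally show ?thesis .
  qed
  have ginv: "invertible g" unfolding g_def by (rule inv_nil) (simp add: EE)
  have gcong: "\<forall>i j. \<pi> (g $ i $ j - mat 1 $ i $ j) = 0" by (simp add: g_def piE)
  have final: "deg_part 2 (subst g ` I) \<subseteq> qperp2 \<iota> q"
  proof
    fix h assume "h \<in> deg_part 2 (subst g ` I)"
    then obtain f where f: "f \<in> I" "h = subst g f" and hh: "homog 2 h" by (auto simp: deg_part_def)
    define f2 where "f2 = homog_part 2 f"
    have f2I: "f2 \<in> deg_part 2 I"
      using Igr f unfolding graded_submodule_def deg_part_def f2_def by (auto simp: homog_homog_part)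
    have PM: "Pf \<iota> q (mmono g \<alpha>) = (if mdeg \<alpha> = 2 then cq \<iota> q \<alpha> - N \<alpha> else 0)" for \<alpha>
    proof (cases "mdeg \<alpha> = 2")
      case True
      then obtain a b where ab: "\<alpha> = Poly_Mapping.single a 1 + Poly_Mapping.single b 1" using mdeg2 by blast
      have "Pf \<iota> q (mmono g \<alpha>) = (\<Sum>j\<in>UNIV. \<Sum>k\<in>UNIV. g$a$j * g$b$k * Hp j k)"
        unfolding ab mono2 Pf_LL Hp_def ..
      also have "\<dots> = Hp a b - M a b" by (rule LL)
      also have "Hp a b = cq \<iota> q \<alpha>" unfolding Hp_def ab by (rule Pf_vv)
      also have "M a b = N \<alpha>" by (simp add: M_def ab)
      finally show ?thesis using True by simp
    next
      case False
      have "Pf \<iota> q (mmono g \<alpha>) = 0" unfolding Pf_def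
      proof (rule sum.neutral, rule ballI)
        fix \<beta> assume \<beta>: "\<beta> \<in> Poly_Mapping.keys q"
        then have "mdeg \<beta> = 2" using qh unfolding homog_def by blast
        then have "\<beta> \<notin> Poly_Mapping.keys (mmono g \<alpha>)" using homog_mono[of \<alpha> g] False unfolding homog_def by auto
        then show "Poly_Mapping.lookup (mmono g \<alpha>) \<beta> * \<iota> (Poly_Mapping.lookup q \<beta>) * of_nat (diff_coeff \<beta> \<beta>) = 0"
          by (simp add: in_keys_iff)
      qed
      then show ?thesis using False by simp
    qed
    have "Pf \<iota> q h = (\<Sum>\<alpha>\<in>Poly_Mapping.keys f. Poly_Mapping.lookup f \<alpha> * Pf \<iota> q (mmono g \<alpha>))"
      unfolding f(2) subst_eq Pf_sum Pf_const_mult ..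
    also have "\<dots> = (\<Sum>\<alpha>\<in>Poly_Mapping.keys f. if mdeg \<alpha> = 2 then Poly_Mapping.lookup f \<alpha> * (cq \<iota> q \<alpha> - N \<alpha>) else 0)"
      by (rule sum.cong[OF refl]) (simp add: PM)
    also have "\<dots> = (\<Sum>\<alpha>\<in>{\<alpha>\<in>Poly_Mapping.keys f. mdeg \<alpha> = 2}. Poly_Mapping.lookup f \<alpha> * (cq \<iota> q \<alpha> - N \<alpha>))"
      by (rule sum.inter_filter[symmetric]) simp
    also have "\<dots> = (\<Sum>\<alpha>\<in>Poly_Mapping.keys f2. Poly_Mapping.lookup f2 \<alpha> * (cq \<iota> q \<alpha> - N \<alpha>))"
      unfolding f2_def keys_homog_part by (rule sum.cong[OF refl]) (simp add: lookup_homog_part)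
    also have "\<dots> = Pf \<iota> q f2 - (\<Sum>\<alpha>\<in>Poly_Mapping.keys f2. Poly_Mapping.lookup f2 \<alpha> * N \<alpha>)"
      using Pf_alt[of "Poly_Mapping.keys f2" f2 \<iota> q] by (simp add: right_diff_distrib sum_subtractf)
    also have "\<dots> = 0" using keyN[OF f2I] by simp
    finally have "Pf \<iota> q h = 0" .
    then show "h \<in> qperp2 \<iota> q" using apolar_homog2[OF hh qh, of \<iota>] hh by (simp add: qperp2_def)
  qed
  show ?thesis using ginv gcong final by blast
qed


end
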